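(* Let $\beta_2,\beta_3,\delta_1,\delta_2,\delta_3,\mu_1,\mu_2,\eta,K_1,K_2,K_3$ be positive real numbers and consider the system of ordinary differential equations \[ \begin{aligned} \dot{H} &= - \delta_1 H - \eta SH + \mu_1C\left(1-\frac{H}{K_1}\right), \\ \dot{S} &= \beta_2 S \left(1-\frac{S}{K_2}\right) - \delta_2 S - \eta S H + \mu_2 C \left(1-\frac{S}{K_2}\right), \\ \dot{C} &= \beta_3 C \left(1-\frac{C}{K_3}\right) - \delta_3 C + \eta S H \end{aligned} \] on $\mathbb{R}^3$. Let \[ \tilde{K}_3 := \frac{1}{2} \left( \frac{\beta_3 - \delta_3}{\beta_3} K_3 + \sqrt{\left(\frac{\beta_3-\delta_3}{\beta_3}\right)^2 K_3^2 + 8\frac{\eta}{\beta_3} K_1 K_2K_3} \right) \] and $D=[0, K_1] \times [0, K_2] \times [0, \tilde{K}_3]$. Then $D$ is positively invariant under this system, i.e.\ every solution $(H,S,C)(t)$ with $(H,S,C)(0)\in D$ satisfies $(H,S,C)(t)\in D$ for all $t\ge 0$ in its interval of existence.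
   Context: The system is a population model (mycobiont host $H$, photobiont symbiont $S$, lichen complex $C$) in which all parameters are birth, death, formation rates and carrying capacities. *)

theory Defs
  imports "HOL-Analysis.Analysis"
begin

definition K3tilde :: "real \<Rightarrow> real \<Rightarrow> real \<Rightarrow> real \<Rightarrow> real \<Rightarrow> real \<Rightarrow> real" where
  "K3tilde \<beta>\<^sub>3 \<delta>\<^sub>3 \<eta> K\<^sub>1 K\<^sub>2 K\<^sub>3 =
     (1/2) * ((\<beta>\<^sub>3 - \<delta>\<^sub>3) / \<beta>\<^sub>3 * K\<^sub>3
       + sqrt (((\<beta>\<^sub>3 - \<delta>\<^sub>3) / \<beta>\<^sub>3)\<^sup>2 * K\<^sub>3\<^sup>2 + 8 * (\<eta> / \<beta>\<^sub>3) * K\<^sub>1 * K\<^sub>2 * K\<^sub>3))"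

end

theory Submission
  imports Defs
begin


lemma Pm:
  fixes x y e B :: real
  assumes "x \<ge> -e" "0 \<le> y" "y \<le> B" "e \<ge> 0"
  shows "x * y \<ge> - e * B"
proof -
  have "x * y \<ge> (-e) * y" using mult_right_mono[OF assms(1) assms(2)] by simp
  moreover have "(-e) * y \<ge> - e * B" using assms by (simp add: mult_left_mono)
  ultimately show ?thesis by linarith
qed

lemma c1:
  fixes d1 eta mu1 K1 h s c e :: real
  assumes "d1>0" "eta>0" "mu1>0" "K1>0" "0<e" "e\<le>1" "h = -e" "s \<ge> -e" "c \<ge> -e"
  shows "- d1 * h - eta * s * h + mu1 * c * (1 - h / K1) \<ge> -(eta + mu1*(1+1/K1)) * e"
proof -
  have a: "s * (eta * e) \<ge> - e * eta" by (rule Pm) (use assms in auto)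
  have "e/K1 \<le> 1/K1" using assms by (simp add: divide_right_mono)
  hence b: "c * (mu1 * (1 + e / K1)) \<ge> - e * (mu1 * (1 + 1 / K1))"
    by (intro Pm) (use assms in auto)
  have "- d1 * h - eta * s * h + mu1 * c * (1 - h / K1) = d1*e + s * (eta * e) + c * (mu1 * (1 + e / K1))"
    using assms by (simp add: algebra_simps)
  moreover have "d1 * e > 0" using assms by simp
  ultimately show ?thesis using a b by (simp add: algebra_simps)
qed

lemma c2:
  fixes d1 eta mu1 K1 h s c e :: real
  assumes "d1>0" "eta>0" "mu1>0" "K1>0" "0<e" "e\<le>1" "h = K1 + e" "s \<ge> -e" "c \<ge> -e"
  shows "- (- d1 * h - eta * s * h + mu1 * c * (1 - h / K1)) \<ge> -(eta*(K1+1) + mu1/K1) * e"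
proof -
  have a: "s * (eta * h) \<ge> - e * (eta * (K1+1))" by (rule Pm) (use assms in auto)
  have "e/K1 \<le> 1/K1" using assms by (simp add: divide_right_mono)
  have "mu1 * e / K1 \<le> mu1 / K1" by (rule divide_right_mono) (use assms in \<open>auto simp: mult_left_le\<close>)
  hence b: "c * (mu1 * e / K1) \<ge> - e * (mu1 / K1)"
    by (intro Pm) (use assms in auto)
  have "- (- d1 * h - eta * s * h + mu1 * c * (1 - h / K1)) = d1*h + s * (eta * h) + c * (mu1 * e / K1)"
    using assms by (simp add: field_simps)
  moreover have "d1 * h > 0" using assms by simp
  ultimately show ?thesis using a b by (simp add: algebra_simps)
qed

lemma c3:
  fixes b2 d2 eta mu2 K2 h s c e :: real
  assumes "b2>0" "d2>0" "eta>0" "mu2>0" "K2>0" "0<e" "e\<le>1" "s = -e" "h \<ge> -e" "c \<ge> -e"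
  shows "b2 * s * (1 - s / K2) - d2 * s - eta * s * h + mu2 * c * (1 - s / K2)
     \<ge> -(b2*(1+1/K2) + eta + mu2*(1+1/K2)) * e"
proof -
  have a: "h * (eta * e) \<ge> - e * eta" by (rule Pm) (use assms in auto)
  have ek: "e/K2 \<le> 1/K2" using assms by (simp add: divide_right_mono)
  hence b: "c * (mu2 * (1 + e / K2)) \<ge> - e * (mu2 * (1 + 1 / K2))"
    by (intro Pm) (use assms in auto)
  have cc: "b2 * e * (1 + e / K2) \<le> b2 * e * (1 + 1/K2)"
    using ek assms by (intro mult_left_mono) auto
  have "b2 * s * (1 - s / K2) - d2 * s - eta * s * h + mu2 * c * (1 - s / K2)
     = - b2 * e * (1 + e / K2) + d2 * e + h * (eta * e) + c * (mu2 * (1 + e / K2))"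
    using assms by (simp add: algebra_simps)
  moreover have "d2 * e > 0" using assms by simp
  ultimately show ?thesis using a b cc by (simp add: algebra_simps)
qed

lemma c4:
  fixes b2 d2 eta mu2 K2 h s c e :: real
  assumes "b2>0" "d2>0" "eta>0" "mu2>0" "K2>0" "0<e" "e\<le>1" "s = K2 + e" "h \<ge> -e" "c \<ge> -e"
  shows "- (b2 * s * (1 - s / K2) - d2 * s - eta * s * h + mu2 * c * (1 - s / K2))
     \<ge> -(eta*(K2+1) + mu2/K2) * e"
proof -
  have a: "h * (eta * s) \<ge> - e * (eta * (K2+1))" by (rule Pm) (use assms in auto)
  have "e/K2 \<le> 1/K2" using assms by (simp add: divide_right_mono)
  have "mu2 * e / K2 \<le> mu2 / K2" by (rule divide_right_mono) (use assms in \<open>auto simp: mult_left_le\<close>)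
  hence b: "c * (mu2 * e / K2) \<ge> - e * (mu2 / K2)"
    by (intro Pm) (use assms in auto)
  have "- (b2 * s * (1 - s / K2) - d2 * s - eta * s * h + mu2 * c * (1 - s / K2))
     = b2 * s * e / K2 + d2 * s + h * (eta * s) + c * (mu2 * e / K2)"
    using assms by (simp add: field_simps)
  moreover have "d2 * s > 0" "b2 * s * e / K2 > 0" using assms by simp_all
  ultimately show ?thesis using a b by (simp add: algebra_simps)
qed

lemma prod_lb:
  fixes s h e A B :: real
  assumes "s \<ge> -e" "h \<ge> -e" "s \<le> A" "h \<le> B" "e \<ge> 0" "A \<ge> 0" "B \<ge> 0"
  shows "s * h \<ge> - e * (A + B)"
proof (cases "h \<ge> 0")
  case True
  have "s * h \<ge> - e * B" by (rule Pm) (use assms True in auto)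
  moreover have "e * A \<ge> 0" using assms by simp
  ultimately show ?thesis by (simp add: algebra_simps)
next
  case False
  show ?thesis
  proof (cases "s \<ge> 0")
    case True
    have "h * s \<ge> - e * A" by (rule Pm) (use assms True in auto)
    moreover have "e * B \<ge> 0" using assms by simp
    ultimately show ?thesis by (simp add: algebra_simps)
  next
    case F2: False
    have "s * h > 0" using False F2 by (simp add: mult_neg_neg)
    moreover have "e * (A + B) \<ge> 0" using assms by simp
    ultimately show ?thesis by linarith
  qed
qed

lemma c5:
  fixes b3 d3 eta K1 K2 K3 h s c e :: real
  assumes "b3>0" "d3>0" "eta>0" "K1>0" "K2 > 0" "K3>0" "0<e" "e\<le>1" "c = -e"
    "h \<ge> -e" "s \<ge> -e" "h \<le> K1 + 1" "s \<le> K2 + 1"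
  shows "b3 * c * (1 - c / K3) - d3 * c + eta * s * h \<ge> -(b3*(1+1/K3) + eta*(K1+K2+2)) * e"
proof -
  have ek: "e/K3 \<le> 1/K3" using assms by (simp add: divide_right_mono)
  have cc: "b3 * e * (1 + e / K3) \<le> b3 * e * (1 + 1/K3)"
    using ek assms by (intro mult_left_mono) auto
  have p: "s * h \<ge> - e * ((K2+1) + (K1+1))" by (rule prod_lb) (use assms in auto)
  hence p2: "eta * (s * h) \<ge> eta * (- e * ((K2+1) + (K1+1)))" using mult_left_mono[OF p, of eta] assms by simp
  have "b3 * c * (1 - c / K3) - d3 * c + eta * s * h = - b3 * e * (1 + e / K3) + d3 * e + eta * (s * h)"
    using assms by (simp add: algebra_simps)
  moreover have "d3 * e > 0" using assms by simp
  ultimately show ?thesis using cc p2 by (simp add: algebra_simps)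
qed

lemma prod_ub:
  fixes s h e A B :: real
  assumes "s \<ge> -e" "h \<ge> -e" "s \<le> A + e" "h \<le> B + e" "0 \<le> e" "e \<le> 1" "A > 0" "B > 0"
  shows "s * h \<le> A * B + e * (A + B + 1)"
proof (cases "h \<ge> 0 \<and> s \<ge> 0")
  case True
  have "s * h \<le> (A + e) * (B + e)" using True assms by (intro mult_mono) auto
  moreover have "e * e \<le> e" using assms by (simp add: mult_left_le)
  ultimately show ?thesis by (simp add: algebra_simps)
next
  case False
  have ep: "e * (A + B + 1) \<ge> e" using assms by (simp add: mult_left_mono[of 1 "A+B+1" e, simplified] )
  have AB: "A * B > 0" using assms by simp
  show ?thesis
  proof (cases "h < 0 \<and> s < 0")
    case True
    have "s * h \<le> (-e) * (-e)"
      using True assms by (smt (verit, ccfv_threshold) mult_mono mult_minus_left mult_minus_right minus_mult_minus)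
    moreover have "e * e \<le> e" using assms by (simp add: mult_left_le)
    ultimately show ?thesis using ep AB by simp
  next
    case F2: False
    have "s * h \<le> 0" using False F2 by (auto simp: mult_le_0_iff)
    moreover have "e \<ge> 0" using assms by simp
    ultimately show ?thesis using ep AB by linarith
  qed
qed

lemma c6:
  fixes b3 d3 eta K1 K2 K3 k h s c e :: real
  assumes "b3>0" "d3>0" "eta>0" "K1>0" "K2 > 0" "K3>0" "0<e" "e\<le>1" "k > 0" "c = k + e"
    "h \<ge> -e" "s \<ge> -e" "h \<le> K1 + e" "s \<le> K2 + e"
    "b3 * k^2 / K3 - (b3 - d3) * k - eta * K1 * K2 \<ge> 0"
  shows "- (b3 * c * (1 - c / K3) - d3 * c + eta * s * h) \<ge> -(\<bar>b3 - d3\<bar> + eta*(K1+K2+1)) * e"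
proof -
  have p: "s * h \<le> K2 * K1 + e * (K2 + K1 + 1)" by (rule prod_ub) (use assms in auto)
  hence p2: "eta * (s * h) \<le> eta * (K2 * K1 + e * (K2 + K1 + 1))" using assms by (simp add: mult_left_mono)
  have q: "b3 * c^2 / K3 \<ge> b3 * k^2 / K3"
  proof -
    have "c^2 \<ge> k^2" using assms by (simp add: power_mono)
    thus ?thesis using assms by (simp add: divide_right_mono)
  qed
  have r: "(b3 - d3) * e \<le> \<bar>b3 - d3\<bar> * e" using assms by (simp add: mult_right_mono)
  have "- (b3 * c * (1 - c / K3) - d3 * c + eta * s * h) = b3 * c^2 / K3 - (b3 - d3) * k - (b3 - d3) * e - eta * (s * h)"
    using assms by (simp add: field_simps power2_eq_square)
  thus ?thesis using p2 q r assms(15) by (simp add: algebra_simps)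
qed



lemma first_crossing:
  fixes m :: "real \<Rightarrow> real" and T t0 :: real
  assumes cont: "continuous_on {0..T} m" and m0: "m 0 > 0" and t0: "0 \<le> t0" "t0 \<le> T" "m t0 \<le> 0"
  shows "\<exists>t1. 0 < t1 \<and> t1 \<le> T \<and> m t1 = 0 \<and> (\<forall>s. 0 \<le> s \<and> s < t1 \<longrightarrow> m s > 0)"
proof -
  define Z where "Z = {0..T} \<inter> m -` {..0}"
  have cl: "closed Z" unfolding Z_def by (rule continuous_closed_preimage[OF cont]) auto
  have ne: "Z \<noteq> {}" using t0 unfolding Z_def by auto
  have bb: "bdd_below Z" unfolding Z_def by (rule bdd_belowI[of _ 0]) auto
  define t1 where "t1 = Inf Z"
  have t1Z: "t1 \<in> Z" unfolding t1_def by (rule closed_contains_Inf[OF ne bb cl])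
  have below: "m s > 0" if "0 \<le> s" "s < t1" for s
  proof (rule ccontr)
    assume "\<not> m s > 0"
    hence "s \<in> Z" using that t1Z unfolding Z_def by auto
    hence "t1 \<le> s" unfolding t1_def using bb by (simp add: cInf_lower)
    thus False using that by simp
  qed
  have t1r: "0 \<le> t1" "t1 \<le> T" "m t1 \<le> 0" using t1Z unfolding Z_def by auto
  have "t1 \<noteq> 0" using t1r m0 by auto
  hence t1p: "0 < t1" using t1r by simp
  have "continuous_on {0..t1} m" by (rule continuous_on_subset[OF cont]) (use t1r in auto)
  then obtain x where x: "0 \<le> x" "x \<le> t1" "m x = 0"
    using IVT2'[of m t1 0 0] t1r m0 by auto
  have "x = t1" using below[of x] x by force
  thus ?thesis using t1p t1r x below by (intro exI[of _ t1]) auto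
qed

lemma deriv_sign:
  fixes f :: "real \<Rightarrow> real"
  assumes d: "(f has_real_derivative D) (at t within J)" and sub: "{0..t} \<subseteq> J" and tp: "0 < t"
    and ft: "f t = 0" and pos: "\<forall>s. 0 \<le> s \<and> s < t \<longrightarrow> f s > 0"
  shows "D \<le> 0"
proof -
  have d2: "(f has_real_derivative D) (at t within {0..t})" using DERIV_subset[OF d sub] .
  hence "((\<lambda>y. (f y - f t) / (y - t)) \<longlongrightarrow> D) (at t within {0..t})"
    by (simp add: has_field_derivative_iff)
  hence lim: "((\<lambda>y. (f y - f t) / (y - t)) \<longlongrightarrow> D) (at_left t)"
    using at_within_Icc_at_left[OF tp] by simp
  have ev: "eventually (\<lambda>y. (f y - f t) / (y - t) \<le> 0) (at_left t)"
  proof -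
    have "eventually (\<lambda>y. y \<in> {0<..<t}) (at_left t)" using tp by (rule eventually_at_left_real)
    thus ?thesis
    proof (rule eventually_mono)
      fix y assume "y \<in> {0<..<t}"
      hence "f y > 0" "y - t < 0" using pos by auto
      thus "(f y - f t) / (y - t) \<le> 0" using ft by (simp add: divide_pos_neg less_imp_le)
    qed
  qed
  show ?thesis by (rule tendsto_upperbound[OF lim ev]) (simp add: trivial_limit_at_left_real)
qed

lemma small_pos:
  fixes x c d :: real
  assumes "c > 0" "d > 0" "\<And>\<epsilon>. 0 < \<epsilon> \<Longrightarrow> \<epsilon> \<le> d \<Longrightarrow> x + \<epsilon> * c > 0"
  shows "x \<ge> 0"
proof (rule ccontr)
  assume "\<not> x \<ge> 0"
  define \<epsilon> where "\<epsilon> = min d (- x / c)"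
  have "\<epsilon> > 0" "\<epsilon> \<le> d" using assms \<open>\<not> x \<ge> 0\<close> by (auto simp: \<epsilon>_def divide_neg_pos)
  hence "x + \<epsilon> * c > 0" using assms by auto
  moreover have "\<epsilon> * c \<le> (- x / c) * c" using assms by (intro mult_right_mono) (auto simp: \<epsilon>_def)
  ultimately show False using assms by simp
qed



lemma ktilde:
  fixes b3 d3 eta K1 K2 K3 :: real
  assumes "b3>0" "eta>0" "K1>0" "K2>0" "K3>0"
  shows "K3tilde b3 d3 eta K1 K2 K3 > 0 \<and>
    b3 * (K3tilde b3 d3 eta K1 K2 K3)^2 / K3 - (b3-d3) * K3tilde b3 d3 eta K1 K2 K3 - eta*K1*K2 \<ge> 0"
proof -
  define a where "a = (b3 - d3) / b3"
  define q where "q = eta / b3 * K1 * K2 * K3"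
  define r where "r = sqrt ((a*K3)^2 + 8*q)"
  define k where "k = K3tilde b3 d3 eta K1 K2 K3"
  have qp: "q > 0" using assms by (simp add: q_def)
  have rr1: "((b3 - d3) / b3)\<^sup>2 * K3\<^sup>2 = (a*K3)^2" by (simp add: a_def power_mult_distrib power_divide)
  have rr2: "8 * (eta / b3) * K1 * K2 * K3 = 8*q" by (simp add: q_def)
  have kd: "k = (a*K3 + r)/2" unfolding k_def K3tilde_def r_def
    by (simp only: rr1 rr2) (simp add: a_def)
  have r2: "r^2 = (a*K3)^2 + 8*q" unfolding r_def using qp by simp
  have "\<bar>a*K3\<bar> = sqrt ((a*K3)^2)" by simp
  also have "\<dots> < r" unfolding r_def using qp by (intro real_sqrt_less_mono) simp
  finally have rgt: "\<bar>a*K3\<bar> < r" .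
  have kp: "k > 0" using kd rgt by (simp add: abs_less_iff)
  have "k^2 - a*K3*k = ((a*K3+r)/2)^2 - a*K3*((a*K3+r)/2)" by (simp only: kd)
  also have "\<dots> = (r^2 - (a*K3)^2)/4" by (simp add: power2_eq_square field_simps)
  also have "\<dots> = 2*q" using r2 by simp
  finally have kk: "k^2 - a*K3*k = 2*q" .
  have ab: "b3 / K3 * (a * K3) = b3 - d3" using assms by (simp add: a_def)
  have e1: "b3 / K3 * (k^2 - a*K3*k) = b3 / K3 * k^2 - (b3 / K3 * (a * K3)) * k"
    by (simp add: algebra_simps)
  have e2: "b3 / K3 * k^2 = b3 * k^2 / K3" by simp
  have "b3 * k^2 / K3 - (b3-d3)*k - eta*K1*K2 = b3 / K3 * (k^2 - a*K3*k) - eta*K1*K2"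
    unfolding e1 e2 ab by simp
  also have "\<dots> = eta*K1*K2" using kk assms by (simp add: q_def field_simps)
  finally have "b3 * k^2 / K3 - (b3-d3)*k - eta*K1*K2 \<ge> 0" using assms by simp
  thus ?thesis using kp unfolding k_def by simp
qed

lemma min6_le:
  fixes a b c d e f g :: real
  assumes "\<not> (a + g > 0 \<and> b + g > 0 \<and> c + g > 0 \<and> d + g > 0 \<and> e + g > 0 \<and> f + g > 0)"
  shows "min (min (min a b) (min c d)) (min e f) + g \<le> 0"
  using assms by linarith
lemma min6_pos:
  fixes a b c d e f g :: real
  assumes "min (min (min a b) (min c d)) (min e f) + g > 0"
  shows "a + g > 0 \<and> b + g > 0 \<and> c + g > 0 \<and> d + g > 0 \<and> e + g > 0 \<and> f + g > 0"
  using assms by linarith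
lemma min6_eq:
  fixes a b c d e f g :: real
  assumes "min (min (min a b) (min c d)) (min e f) + g = 0"
  shows "a \<ge> -g \<and> b \<ge> -g \<and> c \<ge> -g \<and> d \<ge> -g \<and> e \<ge> -g \<and> f \<ge> -g"
    "a = -g \<or> b = -g \<or> c = -g \<or> d = -g \<or> e = -g \<or> f = -g"
  using assms by linarith+

lemma fin:
  fixes D e c L :: real
  assumes "D + e * L \<le> 0" "D \<ge> - c * e" "c + 1 \<le> L" "e > 0"
  shows False
proof -
  have "e * (c + 1) \<le> e * L" using assms by (intro mult_left_mono) auto
  thus False using assms by (simp add: algebra_simps)
qed


theorem theorem1:
  fixes \<beta>\<^sub>2 \<beta>\<^sub>3 \<delta>\<^sub>1 \<delta>\<^sub>2 \<delta>\<^sub>3 \<mu>\<^sub>1 \<mu>\<^sub>2 \<eta> K\<^sub>1 K\<^sub>2 K\<^sub>3 :: real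
    and H S C :: "real \<Rightarrow> real"
    and J :: "real set"
  assumes pos: "\<beta>\<^sub>2 > 0" "\<beta>\<^sub>3 > 0" "\<delta>\<^sub>1 > 0" "\<delta>\<^sub>2 > 0" "\<delta>\<^sub>3 > 0"
      "\<mu>\<^sub>1 > 0" "\<mu>\<^sub>2 > 0" "\<eta> > 0" "K\<^sub>1 > 0" "K\<^sub>2 > 0" "K\<^sub>3 > 0"
    and J: "is_interval J" "0 \<in> J"
    and dH: "\<And>t. t \<in> J \<Longrightarrow> (H has_real_derivative
        (- \<delta>\<^sub>1 * H t - \<eta> * S t * H t + \<mu>\<^sub>1 * C t * (1 - H t / K\<^sub>1))) (at t within J)"
    and dS: "\<And>t. t \<in> J \<Longrightarrow> (S has_real_derivative
        (\<beta>\<^sub>2 * S t * (1 - S t / K\<^sub>2) - \<delta>\<^sub>2 * S t - \<eta> * S t * H t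
          + \<mu>\<^sub>2 * C t * (1 - S t / K\<^sub>2))) (at t within J)"
    and dC: "\<And>t. t \<in> J \<Longrightarrow> (C has_real_derivative
        (\<beta>\<^sub>3 * C t * (1 - C t / K\<^sub>3) - \<delta>\<^sub>3 * C t + \<eta> * S t * H t)) (at t within J)"
    and init: "H 0 \<in> {0..K\<^sub>1}" "S 0 \<in> {0..K\<^sub>2}" "C 0 \<in> {0..K3tilde \<beta>\<^sub>3 \<delta>\<^sub>3 \<eta> K\<^sub>1 K\<^sub>2 K\<^sub>3}"
  shows "\<forall>t\<in>J. t \<ge> 0 \<longrightarrow>
     H t \<in> {0..K\<^sub>1} \<and> S t \<in> {0..K\<^sub>2} \<and> C t \<in> {0..K3tilde \<beta>\<^sub>3 \<delta>\<^sub>3 \<eta> K\<^sub>1 K\<^sub>2 K\<^sub>3}"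
  proof -
  define k where "k = K3tilde \<beta>\<^sub>3 \<delta>\<^sub>3 \<eta> K\<^sub>1 K\<^sub>2 K\<^sub>3"
  have kp: "k > 0" and kb: "\<beta>\<^sub>3 * k^2 / K\<^sub>3 - (\<beta>\<^sub>3 - \<delta>\<^sub>3) * k - \<eta> * K\<^sub>1 * K\<^sub>2 \<ge> 0"
    using ktilde[of \<beta>\<^sub>3 \<eta> K\<^sub>1 K\<^sub>2 K\<^sub>3 \<delta>\<^sub>3] pos unfolding k_def by auto
  define c1 where "c1 = \<eta> + \<mu>\<^sub>1 * (1 + 1 / K\<^sub>1)"
  define c2 where "c2 = \<eta> * (K\<^sub>1 + 1) + \<mu>\<^sub>1 / K\<^sub>1"
  define c3 where "c3 = \<beta>\<^sub>2 * (1 + 1 / K\<^sub>2) + \<eta> + \<mu>\<^sub>2 * (1 + 1 / K\<^sub>2)"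
  define c4 where "c4 = \<eta> * (K\<^sub>2 + 1) + \<mu>\<^sub>2 / K\<^sub>2"
  define c5 where "c5 = \<beta>\<^sub>3 * (1 + 1 / K\<^sub>3) + \<eta> * (K\<^sub>1 + K\<^sub>2 + 2)"
  define c6 where "c6 = \<bar>\<beta>\<^sub>3 - \<delta>\<^sub>3\<bar> + \<eta> * (K\<^sub>1 + K\<^sub>2 + 1)"
  have cnn: "c1 \<ge> 0" "c2 \<ge> 0" "c3 \<ge> 0" "c4 \<ge> 0" "c5 \<ge> 0" "c6 \<ge> 0"
    unfolding c1_def c2_def c3_def c4_def c5_def c6_def using pos by auto
  define L where "L = 1 + c1 + c2 + c3 + c4 + c5 + c6"
  have Lc: "c1 + 1 \<le> L" "c2 + 1 \<le> L" "c3 + 1 \<le> L" "c4 + 1 \<le> L" "c5 + 1 \<le> L" "c6 + 1 \<le> L"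
    and Lp: "L > 0" using cnn unfolding L_def by auto
  define fH where "fH = (\<lambda>t. - \<delta>\<^sub>1 * H t - \<eta> * S t * H t + \<mu>\<^sub>1 * C t * (1 - H t / K\<^sub>1))"
  define fS where "fS = (\<lambda>t. \<beta>\<^sub>2 * S t * (1 - S t / K\<^sub>2) - \<delta>\<^sub>2 * S t - \<eta> * S t * H t
          + \<mu>\<^sub>2 * C t * (1 - S t / K\<^sub>2))"
  define fC where "fC = (\<lambda>t. \<beta>\<^sub>3 * C t * (1 - C t / K\<^sub>3) - \<delta>\<^sub>3 * C t + \<eta> * S t * H t)"
  have dH': "\<And>t. t \<in> J \<Longrightarrow> (H has_real_derivative fH t) (at t within J)" using dH unfolding fH_def by auto
  have dS': "\<And>t. t \<in> J \<Longrightarrow> (S has_real_derivative fS t) (at t within J)" using dS unfolding fS_def by auto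
  have dC': "\<And>t. t \<in> J \<Longrightarrow> (C has_real_derivative fC t) (at t within J)" using dC unfolding fC_def by auto
  have cH: "continuous_on J H" using dH' by (meson DERIV_continuous continuous_on_eq_continuous_within)
  have cS: "continuous_on J S" using dS' by (meson DERIV_continuous continuous_on_eq_continuous_within)
  have cC: "continuous_on J C" using dC' by (meson DERIV_continuous continuous_on_eq_continuous_within)
  have key: "H t + \<epsilon> * exp (L * t) > 0 \<and> K\<^sub>1 - H t + \<epsilon> * exp (L * t) > 0 \<and>
      S t + \<epsilon> * exp (L * t) > 0 \<and> K\<^sub>2 - S t + \<epsilon> * exp (L * t) > 0 \<and>
      C t + \<epsilon> * exp (L * t) > 0 \<and> k - C t + \<epsilon> * exp (L * t) > 0"
    if T: "T \<in> J" "0 \<le> T" and eps: "0 < \<epsilon>" "\<epsilon> \<le> exp (- (L * T))" and t: "0 \<le> t" "t \<le> T" for T \<epsilon> t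
  proof (rule ccontr)
    assume neg: "\<not> ?thesis"
    have subT: "{0..T} \<subseteq> J"
    proof
      fix x assume "x \<in> {0..T}"
      thus "x \<in> J" by (intro mem_is_interval_1_I[OF J(1) J(2) T(1)]) auto
    qed
    define g where "g = (\<lambda>t. \<epsilon> * exp (L * t))"
    have gd: "(g has_real_derivative g t * L) (at t within J)" for t
      unfolding g_def by (auto intro!: derivative_eq_intros)
    define m where "m = (\<lambda>t. min (min (min (H t) (K\<^sub>1 - H t)) (min (S t) (K\<^sub>2 - S t))) (min (C t) (k - C t)) + g t)"
    have cm: "continuous_on {0..T} m"
    proof -
      have "continuous_on {0..T} H" "continuous_on {0..T} S" "continuous_on {0..T} C"
        using cH cS cC subT by (auto intro: continuous_on_subset)
      thus ?thesis unfolding m_def g_def by (intro continuous_intros) auto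
    qed
    have m0: "m 0 > 0" using init eps unfolding m_def g_def k_def by auto
    have mt: "m t \<le> 0" using neg unfolding m_def g_def by (rule min6_le)
    obtain t1 where t1: "0 < t1" "t1 \<le> T" "m t1 = 0" and below: "\<forall>s. 0 \<le> s \<and> s < t1 \<longrightarrow> m s > 0"
      using first_crossing[OF cm m0 t mt] by blast
    have sub: "{0..t1} \<subseteq> J" using subT t1 by auto
    have t1J: "t1 \<in> J" using sub t1 by auto
    define e where "e = g t1"
    have ep: "e > 0" unfolding e_def g_def using eps by simp
    have "exp (L * t1) \<le> exp (L * T)" using t1 Lp by simp
    hence "e \<le> exp (- (L * T)) * exp (L * T)" unfolding e_def g_def using eps
      by (intro mult_mono) auto
    hence e1: "e \<le> 1" by (simp add: exp_minus field_simps)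
    have box: "H t1 \<ge> -e" "K\<^sub>1 - H t1 \<ge> -e" "S t1 \<ge> -e" "K\<^sub>2 - S t1 \<ge> -e" "C t1 \<ge> -e" "k - C t1 \<ge> -e"
      using min6_eq(1)[OF t1(3)[unfolded m_def]] unfolding e_def by auto
    have hit: "H t1 = -e \<or> K\<^sub>1 - H t1 = -e \<or> S t1 = -e \<or> K\<^sub>2 - S t1 = -e \<or> C t1 = -e \<or> k - C t1 = -e"
      using min6_eq(2)[OF t1(3)[unfolded m_def]] unfolding e_def by auto
    have bel: "H s + g s > 0 \<and> K\<^sub>1 - H s + g s > 0 \<and> S s + g s > 0 \<and> K\<^sub>2 - S s + g s > 0 \<and>
       C s + g s > 0 \<and> k - C s + g s > 0" if "0 \<le> s" "s < t1" for s
      using below that unfolding m_def by (intro min6_pos) auto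
    have ge: "g t1 * L = e * L" unfolding e_def by simp
    show False
      using hit
    proof (elim disjE)
      assume h: "H t1 = -e"
      have "fH t1 + g t1 * L \<le> 0"
        by (rule deriv_sign[OF DERIV_add[OF dH'[OF t1J] gd] sub t1(1)]) (use h bel e_def in auto)
      moreover have "fH t1 \<ge> - c1 * e" unfolding fH_def c1_def
        by (rule c1) (use pos ep e1 h box in auto)
      ultimately show False using fin[of "fH t1" e L c1] Lc ep ge by simp
    next
      assume h: "K\<^sub>1 - H t1 = -e"
      have "(0 - fH t1) + g t1 * L \<le> 0"
        by (rule deriv_sign[OF DERIV_add[OF DERIV_diff[OF DERIV_const dH'[OF t1J]] gd] sub t1(1)])
          (use h bel e_def in auto)
      moreover have "- fH t1 \<ge> - c2 * e" unfolding fH_def c2_def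
        by (rule c2) (use pos ep e1 h box in auto)
      ultimately show False using fin[of "- fH t1" e L c2] Lc ep ge by simp
    next
      assume h: "S t1 = -e"
      have "fS t1 + g t1 * L \<le> 0"
        by (rule deriv_sign[OF DERIV_add[OF dS'[OF t1J] gd] sub t1(1)]) (use h bel e_def in auto)
      moreover have "fS t1 \<ge> - c3 * e" unfolding fS_def c3_def
        by (rule c3) (use pos ep e1 h box in auto)
      ultimately show False using fin[of "fS t1" e L c3] Lc ep ge by simp
    next
      assume h: "K\<^sub>2 - S t1 = -e"
      have "(0 - fS t1) + g t1 * L \<le> 0"
        by (rule deriv_sign[OF DERIV_add[OF DERIV_diff[OF DERIV_const dS'[OF t1J]] gd] sub t1(1)])
          (use h bel e_def in auto)
      moreover have "- fS t1 \<ge> - c4 * e" unfolding fS_def c4_def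
        by (rule c4) (use pos ep e1 h box in auto)
      ultimately show False using fin[of "- fS t1" e L c4] Lc ep ge by simp
    next
      assume h: "C t1 = -e"
      have "fC t1 + g t1 * L \<le> 0"
        by (rule deriv_sign[OF DERIV_add[OF dC'[OF t1J] gd] sub t1(1)]) (use h bel e_def in auto)
      moreover have "fC t1 \<ge> - c5 * e" unfolding fC_def c5_def
        by (rule c5) (use pos ep e1 h box in auto)
      ultimately show False using fin[of "fC t1" e L c5] Lc ep ge by simp
    next
      assume h: "k - C t1 = -e"
      have "(0 - fC t1) + g t1 * L \<le> 0"
        by (rule deriv_sign[OF DERIV_add[OF DERIV_diff[OF DERIV_const dC'[OF t1J]] gd] sub t1(1)])
          (use h bel e_def in auto)
      moreover have "- fC t1 \<ge> - c6 * e" unfolding fC_def c6_def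
        by (rule c6[where k = k]) (use pos ep e1 h box kp kb in auto)
      ultimately show False using fin[of "- fC t1" e L c6] Lc ep ge by simp
    qed
  qed
  show ?thesis
  proof (intro ballI impI)
    fix t assume tJ: "t \<in> J" and t0: "0 \<le> t"
    have all: "0 \<le> H t \<and> 0 \<le> K\<^sub>1 - H t \<and> 0 \<le> S t \<and> 0 \<le> K\<^sub>2 - S t \<and> 0 \<le> C t \<and> 0 \<le> k - C t"
    proof -
      have P: "\<And>\<epsilon>. 0 < \<epsilon> \<Longrightarrow> \<epsilon> \<le> exp (- (L * t)) \<Longrightarrow>
         H t + \<epsilon> * exp (L * t) > 0 \<and> K\<^sub>1 - H t + \<epsilon> * exp (L * t) > 0 \<and>
         S t + \<epsilon> * exp (L * t) > 0 \<and> K\<^sub>2 - S t + \<epsilon> * exp (L * t) > 0 \<and>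
         C t + \<epsilon> * exp (L * t) > 0 \<and> k - C t + \<epsilon> * exp (L * t) > 0"
        using key[OF tJ t0 _ _ t0 order_refl] by blast
      have ep0: "exp (L * t) > 0" "exp (- (L * t)) > 0" by auto
      show ?thesis
      proof (intro conjI)
        show "0 \<le> H t" by (rule small_pos[OF ep0]) (use P in auto)
        show "0 \<le> K\<^sub>1 - H t" by (rule small_pos[OF ep0]) (use P in auto)
        show "0 \<le> S t" by (rule small_pos[OF ep0]) (use P in auto)
        show "0 \<le> K\<^sub>2 - S t" by (rule small_pos[OF ep0]) (use P in auto)
        show "0 \<le> C t" by (rule small_pos[OF ep0]) (use P in auto)
        show "0 \<le> k - C t" by (rule small_pos[OF ep0]) (use P in auto)
      qed
    qed
    thus "H t \<in> {0..K\<^sub>1} \<and> S t \<in> {0..K\<^sub>2} \<and> C t \<in> {0..K3tilde \<beta>\<^sub>3 \<delta>\<^sub>3 \<eta> K\<^sub>1 K\<^sub>2 K\<^sub>3}"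
      unfolding k_def by auto
  qed
qed

end
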